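(* Let $\mathcal{X}\subseteq\mathbb{R}^d$ be nonempty, closed and convex, let $f:\mathbb{R}^d\to\mathbb{R}$ be convex, and let $\mathcal{X}_\star:=\operatorname{arg\,min}_{x\in\mathcal{X}}f(x)$. Let $x_k\in\mathcal{X}$ and $x_\star\in\mathcal{X}_\star$. Assume $g_k\in\partial f(x_k)$, $0\notin\partial f(x_k)$, and $0<t_k\le\frac{\langle g_k,x_k-x_\star\rangle}{\|g_k\|}$. Let $x_{k+1}\in\operatorname{arg\,min}_{z\in\mathcal{X}\cap\mathcal{B}(x_k,t_k)}\langle g_k,z\rangle$. Then $\|x_k-x_\star\|\ge t_k$, $\|x_{k+1}-x_k\|=t_k$, and $\|x_{k+1}-x_\star\|^2\le\|x_k-x_\star\|^2-t_k^2$.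
   Context: $\partial f(x)$ is the convex subdifferential. $\|\cdot\|$ is the Euclidean norm, $\mathcal{B}(x,t):=\{y:\|y-x\|\le t\}$. *)

theory Defs
  imports "HOL-Analysis.Analysis"
begin

definition subdifferential :: "('a::real_inner \<Rightarrow> real) \<Rightarrow> 'a \<Rightarrow> 'a set" where
  "subdifferential f x = {g. \<forall>y. f y \<ge> f x + inner g (y - x)}"

definition argmin_on :: "('a \<Rightarrow> real) \<Rightarrow> 'a set \<Rightarrow> 'a set" where
  "argmin_on f S = {x \<in> S. \<forall>y\<in>S. f x \<le> f y}"

end

theory Submission
  imports Defs
begin

lemma small_step:
  fixes cc bb qq tt :: real
  assumes "cc \<le> tt\<^sup>2" "qq > 0" "cc < tt\<^sup>2 \<or> bb < 0"
  shows "\<exists>ss. 0 < ss \<and> ss \<le> 1 \<and> cc + 2 * ss * bb + ss\<^sup>2*qq \<le> tt\<^sup>2"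
proof (cases "bb < 0")
  case True
  define ss where "ss = min 1 (-2*bb/qq)"
  have s0: "0 < ss" "ss \<le> 1" using True assms by (auto simp: ss_def divide_neg_pos)
  have "ss * qq \<le> -2*bb" using assms True by (auto simp: ss_def min_def field_simps)
  hence "ss * (2*bb + ss * qq) \<le> 0" using s0 by (simp add: mult_nonneg_nonpos)
  hence "cc + 2 * ss * bb + ss\<^sup>2*qq \<le> cc" by (simp add: power2_eq_square algebra_simps)
  thus ?thesis using s0 assms by fastforce
next
  case False
  hence ct: "cc < tt\<^sup>2" using assms by auto
  define ss where "ss = min 1 ((tt\<^sup>2 - cc)/(2*bb+qq))"
  have bq: "2*bb+qq > 0" using False assms by auto
  have s0: "0 < ss" "ss \<le> 1" using ct bq by (auto simp: ss_def)
  have "ss \<le> (tt\<^sup>2 - cc)/(2*bb+qq)" by (simp add: ss_def)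
  hence "ss * (2*bb+qq) \<le> tt\<^sup>2 - cc" using bq by (simp add: pos_le_divide_eq)
  moreover have "ss\<^sup>2*qq \<le> ss * qq" using s0 assms
    by (simp add: power2_eq_square mult_right_le_one_le)
  ultimately have "cc + 2 * ss * bb + ss\<^sup>2*qq \<le> tt\<^sup>2" by (simp add: algebra_simps)
  thus ?thesis using s0 by blast
qed

theorem proposition7:
  fixes X :: "(real ^ 'd) set" and f :: "real ^ 'd \<Rightarrow> real"
    and xk xs gk xk1 :: "real ^ 'd" and tk :: real
  assumes "X \<noteq> {}" and "closed X" and "convex X"
    and "convex_on UNIV f"
    and "xk \<in> X" and "xs \<in> argmin_on f X"
    and "gk \<in> subdifferential f xk" and "0 \<notin> subdifferential f xk"
    and "0 < tk" and "tk \<le> inner gk (xk - xs) / norm gk"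
    and "xk1 \<in> argmin_on (\<lambda>z. inner gk z) (X \<inter> cball xk tk)"
  shows "norm (xk - xs) \<ge> tk \<and> norm (xk1 - xk) = tk
    \<and> (norm (xk1 - xs))\<^sup>2 \<le> (norm (xk - xs))\<^sup>2 - tk\<^sup>2"
proof -
  define g where "g = gk"
  define u where "u = xk1 - xk"
  define v where "v = xs - xk"
  have g0: "g \<noteq> 0" using assms(7,8) g_def by auto
  have ng: "norm g > 0" using g0 by simp
  have xsX: "xs \<in> X" using assms(6) by (simp add: argmin_on_def)
  have x1X: "xk1 \<in> X" and x1b: "norm u \<le> tk"
    and opt: "\<And>z. z \<in> X \<Longrightarrow> norm (z - xk) \<le> tk \<Longrightarrow> inner g xk1 \<le> inner g z"
    using assms(11) by (auto simp: argmin_on_def u_def g_def dist_norm norm_minus_commute)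
  have gv: "inner g v \<le> - tk * norm g"
  proof -
    have "tk * norm g \<le> inner g (xk - xs)" using assms(10) ng g_def by (simp add: field_simps)
    moreover have "inner g (xk - xs) = - inner g v" by (simp add: v_def inner_diff_right)
    ultimately show ?thesis by simp
  qed
  have c1: "tk \<le> norm v"
  proof -
    have "- inner g v \<le> norm g * norm v"
      using norm_cauchy_schwarz[of "-g" v] by simp
    hence "tk * norm g \<le> norm v * norm g" using gv by (simp add: algebra_simps)
    thus ?thesis using ng by simp
  qed
  have K: "inner g (v - u) \<ge> 0" if H: "norm u < tk \<or> inner u (v - u) < 0"
  proof (cases "v = u")
    case True thus ?thesis by simp
  next
    case False
    have q: "(norm (v-u))\<^sup>2 > 0" using False by simp
    obtain s where s: "0 < s" "s \<le> 1"
      "(norm u)\<^sup>2 + 2 * s * inner u (v-u) + s\<^sup>2*(norm (v-u))\<^sup>2 \<le> tk\<^sup>2"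
    proof -
      have a1: "(norm u)\<^sup>2 \<le> tk\<^sup>2" using x1b by (simp add: power_mono)
      have a2: "(norm u)\<^sup>2 < tk\<^sup>2 \<or> inner u (v-u) < 0"
        using H by (auto intro: power_strict_mono)
      show ?thesis using small_step[OF a1 q a2] that by blast
    qed
    define w where "w = xk1 + s *\<^sub>R (xs - xk1)"
    have wX: "w \<in> X"
    proof -
      have "w = (1 - s) *\<^sub>R xk1 + s *\<^sub>R xs" by (simp add: w_def algebra_simps)
      thus ?thesis using assms(3) x1X xsX s by (simp add: convex_def)
    qed
    have wd: "w - xk = u + s *\<^sub>R (v - u)" by (simp add: w_def u_def v_def algebra_simps)
    have "(norm (w - xk))\<^sup>2 = (norm u)\<^sup>2 + 2 * s * inner u (v-u) + s\<^sup>2*(norm (v-u))\<^sup>2"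
      unfolding wd power2_norm_eq_inner
      by (simp add: inner_add_left inner_add_right power2_eq_square algebra_simps inner_commute)
    hence "(norm (w - xk))\<^sup>2 \<le> tk\<^sup>2" using s by simp
    hence "norm (w - xk) \<le> tk" using assms(9) by (simp add: power2_le_iff_abs_le)
    hence "inner g xk1 \<le> inner g w" using opt wX by blast
    hence "0 \<le> s * inner g (v - u)"
      by (simp add: w_def inner_add_right u_def v_def inner_diff_right algebra_simps)
    thus ?thesis using s by (simp add: zero_le_mult_iff)
  qed
  have lo: "- (norm g * norm u) \<le> inner g u"
    using norm_cauchy_schwarz[of "-g" u] by simp
  have c2: "norm u = tk"
  proof (rule ccontr)
    assume "norm u \<noteq> tk"
    hence lt: "norm u < tk" using x1b by simp
    have "inner g u \<le> inner g v" using K lt by (simp add: inner_diff_right)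
    hence "norm g * tk \<le> norm g * norm u" using gv lo by (simp add: algebra_simps)
    thus False using lt ng by simp
  qed
  have c3: "inner u v \<ge> tk\<^sup>2"
  proof (rule ccontr)
    assume "\<not> ?thesis"
    hence "inner u v < tk\<^sup>2" by simp
    hence "inner u (v - u) < 0" using c2 by (simp add: inner_diff_right flip: power2_norm_eq_inner)
    hence "inner g u \<le> inner g v" using K by (simp add: inner_diff_right)
    hence gu: "inner g u = - tk * norm g" using gv lo c2 by (simp add: algebra_simps)
    define a where "a = tk / norm g"
    have "(norm (u + a *\<^sub>R g))\<^sup>2 = (norm u)\<^sup>2 + 2 * a * inner g u + a\<^sup>2 * (norm g)\<^sup>2"
      unfolding power2_norm_eq_inner
      by (simp add: inner_add_left inner_add_right power2_eq_square algebra_simps inner_commute)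
    also have "\<dots> = 0"
    proof -
      have an: "a * norm g = tk" using ng by (simp add: a_def)
      have "2 * a * inner g u = - 2 * tk * (a * norm g)" using gu by simp
      moreover have "a\<^sup>2 * (norm g)\<^sup>2 = (a * norm g)\<^sup>2" by (simp add: power_mult_distrib)
      ultimately show ?thesis using an c2 by (simp add: power2_eq_square)
    qed
    finally have "u + a *\<^sub>R g = 0" by simp
    hence "u = - a *\<^sub>R g" by (metis add_eq_0_iff2 scaleR_minus_left)
    hence "inner u v = - a * inner g v" by simp
    moreover have "a * (tk * norm g) \<le> a * (- inner g v)"
      using gv ng assms(9) by (intro mult_left_mono) (auto simp: a_def)
    moreover have "a * (tk * norm g) = tk\<^sup>2" using ng by (simp add: a_def power2_eq_square)
    ultimately have "inner u v \<ge> tk\<^sup>2" by simp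
    thus False using \<open>inner u v < tk\<^sup>2\<close> by simp
  qed
  have "(norm (xk1 - xs))\<^sup>2 = (norm u)\<^sup>2 - 2 * inner u v + (norm v)\<^sup>2"
  proof -
    have "xk1 - xs = u - v" by (simp add: u_def v_def)
    thus ?thesis unfolding power2_norm_eq_inner
      by (simp add: inner_diff_left inner_diff_right inner_commute)
  qed
  moreover have "norm v = norm (xk - xs)" by (simp add: v_def norm_minus_commute)
  ultimately show ?thesis using c1 c2 c3 u_def by simp
qed

end
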